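(* Let $c>1$, let $m=m_1\cdots m_c\in S_c$, and let $K$ be the set partition of $S_c$ whose only part with more than one element is the set of cyclic shifts $\{m_am_{a+1}\cdots m_cm_1\cdots m_{a-1}:1\le a\le c\}$. Let $p=1\rightharpoonup m$ and $q=2\rightharpoonup m$, both in $S_{c+1}$. Then every non-avoider in $S_{c+1}$ is $K$-equivalent to $p$ or to $q$.
   Context: Permutations are written in one-line notation as words. For a word $w$ and positive integer $i$, $i\rightharpoonup w$ is the word obtained by increasing by $1$ each letter of $w$ that is $\ge i$ and then prepending $i$. The order permutation (standardization) of a word $u$ of distinct positive integers of length $\ell$ is the unique $\pi\in S_\ell$ with $\pi_i<\pi_j$ iff $u_i<u_j$. The $K$-equivalence on $S_n$ is generated by declaring $\phi\equiv\psi$ whenever $\phi=aub$, $\psi=avb$ for words $a,b,u,v$ with $u,v$ of length $c$ whose order permutations lie in the same part of $K$. A hit is a contiguous subword of length $c$ whose order permutation is a cyclic shift of $m$; a non-avoider is a permutation containing a hit. *)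

theory Defs
  imports Main
begin

definition perms :: "nat \<Rightarrow> nat list set" where
  "perms n = {w. length w = n \<and> distinct w \<and> set w = {1..n}}"

text \<open>The operation i \<rightharpoonup> w.\<close>
definition ins :: "nat \<Rightarrow> nat list \<Rightarrow> nat list" where
  "ins i w = i # map (\<lambda>x. if x \<ge> i then x + 1 else x) w"

definition std :: "nat list \<Rightarrow> nat list" where
  "std u = (THE p. p \<in> perms (length u) \<and>
      (\<forall>i < length u. \<forall>j < length u. p ! i < p ! j \<longleftrightarrow> u ! i < u ! j))"

definition shifts :: "nat list \<Rightarrow> nat list set" where
  "shifts m = {rotate k m | k. k < length m}"

definition Kpart :: "nat \<Rightarrow> nat list \<Rightarrow> nat list set set" where
  "Kpart c m = insert (shifts m) ((\<lambda>s. {s}) ` (perms c - shifts m))"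

definition Kstep :: "nat \<Rightarrow> nat list set set \<Rightarrow> nat list \<Rightarrow> nat list \<Rightarrow> bool" where
  "Kstep c K \<phi> \<psi> \<longleftrightarrow> (\<exists>a b u v. \<phi> = a @ u @ b \<and> \<psi> = a @ v @ b \<and>
      length u = c \<and> length v = c \<and> (\<exists>B\<in>K. std u \<in> B \<and> std v \<in> B))"

definition Kequiv :: "nat \<Rightarrow> nat list set set \<Rightarrow> nat \<Rightarrow> nat list \<Rightarrow> nat list \<Rightarrow> bool" where
  "Kequiv c K n \<phi> \<psi> \<longleftrightarrow> \<phi> \<in> perms n \<and> \<psi> \<in> perms n \<and>
      (\<lambda>x y. x \<in> perms n \<and> y \<in> perms n \<and> (Kstep c K x y \<or> Kstep c K y x))\<^sup>*\<^sup>* \<phi> \<psi>"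

definition nonavoider :: "nat list \<Rightarrow> nat list \<Rightarrow> bool" where
  "nonavoider m w \<longleftrightarrow> (\<exists>a u b. w = a @ u @ b \<and> length u = length m \<and> std u \<in> shifts m)"

end

theory Submission
  imports Defs
begin

definition lf :: "nat \<Rightarrow> nat \<Rightarrow> nat" where
  "lf x y = (if y \<ge> x then y + 1 else y)"

lemma lf_mono: "strict_mono (lf x)"
  by (auto simp: strict_mono_def lf_def)

lemma ins_lf: "ins x w = x # map (lf x) w"
  by (simp add: ins_def lf_def)

lemma rank_card:
  assumes "p \<in> perms n" "i < n"
  shows "card {j. j < n \<and> p ! j < p ! i} = p ! i - 1"
proof -
  have len: "length p = n" and d: "distinct p" and s: "set p = {1..n}"
    using assms(1) by (auto simp: perms_def)
  have inj: "inj_on ((!) p) {j. j < n \<and> p ! j < p ! i}"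
    using d len by (auto simp: inj_on_def nth_eq_iff_index_eq)
  have pi: "p ! i \<in> {1..n}" using s len assms(2) nth_mem by (metis)
  have img: "(!) p ` {j. j < n \<and> p ! j < p ! i} = {1..<p ! i}"
  proof
    show "(!) p ` {j. j < n \<and> p ! j < p ! i} \<subseteq> {1..<p ! i}"
    proof
      fix v assume "v \<in> (!) p ` {j. j < n \<and> p ! j < p ! i}"
      then obtain j where j: "j < n" "p ! j < p ! i" "v = p ! j" by auto
      then have "p ! j \<in> {1..n}" using s len nth_mem by metis
      then show "v \<in> {1..<p ! i}" using j by auto
    qed
  next
    show "{1..<p ! i} \<subseteq> (!) p ` {j. j < n \<and> p ! j < p ! i}"
    proof
      fix v assume v: "v \<in> {1..<p ! i}"
      then have "v \<in> set p" using s pi by auto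
      then obtain j where "j < n" "p ! j = v" using len by (auto simp: in_set_conv_nth)
      then show "v \<in> (!) p ` {j. j < n \<and> p ! j < p ! i}" using v by auto
    qed
  qed
  have "card {j. j < n \<and> p ! j < p ! i} = card ((!) p ` {j. j < n \<and> p ! j < p ! i})"
    using card_image[OF inj] by simp
  also have "\<dots> = p ! i - 1" using img by simp
  finally show ?thesis .
qed

lemma perm_unique:
  assumes "p \<in> perms n" "u \<in> perms n"
    and "\<forall>i<n. \<forall>j<n. p ! i < p ! j \<longleftrightarrow> u ! i < u ! j"
  shows "p = u"
proof (rule nth_equalityI)
  show "length p = length u" using assms by (simp add: perms_def)
next
  fix i assume "i < length p"
  then have i: "i < n" using assms by (simp add: perms_def)
  have "{j. j < n \<and> p ! j < p ! i} = {j. j < n \<and> u ! j < u ! i}"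
    using assms(3) i by auto
  then have "p ! i - 1 = u ! i - 1"
    using rank_card[OF assms(1) i] rank_card[OF assms(2) i] by simp
  moreover have "p ! i \<ge> 1" "u ! i \<ge> 1"
    using assms(1,2) i nth_mem by (fastforce simp: perms_def)+
  ultimately show "p ! i = u ! i" by simp
qed

lemma std_map:
  assumes "strict_mono f" "u \<in> perms (length u)"
  shows "std (map f u) = u"
  unfolding std_def
proof (rule the_equality)
  show "u \<in> perms (length (map f u)) \<and>
    (\<forall>i<length (map f u). \<forall>j<length (map f u). u ! i < u ! j \<longleftrightarrow> map f u ! i < map f u ! j)"
    using assms by (simp add: strict_mono_less)
next
  fix p assume "p \<in> perms (length (map f u)) \<and>
    (\<forall>i<length (map f u). \<forall>j<length (map f u). p ! i < p ! j \<longleftrightarrow> map f u ! i < map f u ! j)"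
  then show "p = u" using perm_unique[of p "length u" u] assms
    by (simp add: strict_mono_less)
qed

lemma perms_rotate: "w \<in> perms n \<Longrightarrow> rotate k w \<in> perms n"
  by (simp add: perms_def)

lemma ins_perm:
  assumes "m \<in> perms c" "1 \<le> x" "x \<le> c + 1"
  shows "ins x m \<in> perms (c + 1)"
proof -
  have len: "length m = c" and d: "distinct m" and s: "set m = {1..c}"
    using assms(1) by (auto simp: perms_def)
  have inj: "inj_on (lf x) (set m)"
    using lf_mono strict_mono_imp_inj_on by blast
  have nx: "x \<notin> lf x ` set m" by (auto simp: lf_def)
  have st: "insert x (lf x ` {1..c}) = {1..c+1}"
  proof
    show "insert x (lf x ` {1..c}) \<subseteq> {1..c + 1}" using assms by (auto simp: lf_def)
  next
    show "{1..c + 1} \<subseteq> insert x (lf x ` {1..c})"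
    proof
      fix z assume z: "z \<in> {1..c+1}"
      show "z \<in> insert x (lf x ` {1..c})"
      proof (cases "z < x")
        case True
        then have "lf x z = z" by (simp add: lf_def)
        then show ?thesis using True z assms by (force)
      next
        case False
        show ?thesis
        proof (cases "z = x")
          case False
          then have "lf x (z - 1) = z" using \<open>\<not> z < x\<close> by (simp add: lf_def)
          moreover have "z - 1 \<in> {1..c}" using z False \<open>\<not> z < x\<close> assms by auto
          ultimately show ?thesis by (metis image_eqI insertCI)
        qed simp
      qed
    qed
  qed
  show ?thesis unfolding ins_lf perms_def
    using len d inj nx st s by (simp add: distinct_map)
qed

definition G :: "nat \<Rightarrow> nat list \<Rightarrow> nat list" where
  "G y m = map (lf y) m @ [y]"

lemma G_rot: "G y m = rotate1 (ins y m)"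
  by (simp add: G_def ins_lf)

lemma G_perm: "m \<in> perms c \<Longrightarrow> 1 \<le> y \<Longrightarrow> y \<le> c + 1 \<Longrightarrow> G y m \<in> perms (c + 1)"
  unfolding G_rot using ins_perm perms_rotate[where k=1] by (metis One_nat_def rotate_Suc rotate0 id_apply)

lemma rot_shift: "m \<noteq> [] \<Longrightarrow> rotate k m \<in> shifts m"
  unfolding shifts_def
  by (rule CollectI, rule exI[of _ "k mod length m"]) (simp add: rotate_conv_mod[symmetric])

lemma shifts_K: "shifts m \<in> Kpart c m" by (simp add: Kpart_def)

lemma Kequiv_refl: "x \<in> perms n \<Longrightarrow> Kequiv c K n x x"
  by (simp add: Kequiv_def)

lemma Kequiv_sym: assumes "Kequiv c K n x y" shows "Kequiv c K n y x"
proof -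
  let ?R = "\<lambda>x y. x \<in> perms n \<and> y \<in> perms n \<and> (Kstep c K x y \<or> Kstep c K y x)"
  have "?R\<^sup>*\<^sup>* x y" using assms by (simp add: Kequiv_def)
  then have "?R\<^sup>*\<^sup>* y x"
  proof (induction rule: rtranclp_induct)
    case base then show ?case by simp
  next
    case (step b d)
    have "?R d b" using step(2) by blast
    then show ?case using step(3) by (rule converse_rtranclp_into_rtranclp)
  qed
  then show ?thesis using assms by (simp add: Kequiv_def)
qed

lemma Kequiv_trans: "Kequiv c K n x y \<Longrightarrow> Kequiv c K n y z \<Longrightarrow> Kequiv c K n x z"
  unfolding Kequiv_def by (meson rtranclp_trans)

lemma Kequiv_step:
  assumes "x \<in> perms n" "y \<in> perms n" "x = a @ u @ b" "y = a @ v @ b"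
    "length u = c" "length v = c" "std u \<in> shifts m" "std v \<in> shifts m"
  shows "Kequiv c (Kpart c m) n x y"
proof -
  have "Kstep c (Kpart c m) x y" unfolding Kstep_def
    using assms shifts_K by blast
  then show ?thesis unfolding Kequiv_def using assms(1,2) by blast
qed

context
  fixes c :: nat and m :: "nat list"
  assumes c1: "c > 1" and mp: "m \<in> perms c"
begin

lemma lenm: "length m = c" using mp by (simp add: perms_def)
lemma mne: "m \<noteq> []" using lenm c1 by auto

lemma std_m: "std (map (lf x) m) = m"
  using std_map[OF lf_mono] mp lenm by simp

lemma m_shift: "m \<in> shifts m" using rot_shift[OF mne, of 0] by simp

lemma conn:
  assumes e: "1 \<le> e" "e \<le> c"
  shows "Kequiv c (Kpart c m) (c+1) (ins e m) (G (e+1) m)"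
    "Kequiv c (Kpart c m) (c+1) (ins (e+1) m) (G e m)"
proof -
  have "e \<in> set m" using mp e by (simp add: perms_def)
  then obtain i where i: "i < c" "m ! i = e" using lenm by (auto simp: in_set_conv_nth)
  define s where "s = rotate i m"
  have sp: "s \<in> perms c" using mp perms_rotate s_def by blast
  have ss: "s \<in> shifts m" using rot_shift[OF mne] s_def by simp
  have hd: "hd s = e" using s_def i lenm mne by (simp add: hd_rotate_conv_nth)
  have sne: "s \<noteq> []" using s_def mne by simp
  define t where "t = tl s"
  have st: "s = e # t" using hd sne t_def by (metis list.collapse)
  have et: "e \<notin> set t" using sp st by (simp add: perms_def)
  have r: "t @ [e] = rotate (Suc i) m" using s_def st by (metis rotate1.simps(2) rotate_Suc)
  have rp: "t @ [e] \<in> perms c" using r mp perms_rotate by metis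
  have rs: "t @ [e] \<in> shifts m" using r rot_shift[OF mne] by metis
  have lt: "length t + 1 = c" using rp by (simp add: perms_def)
  have mapeq: "map (lf (e+1)) t = map (lf e) t"
  proof (rule map_cong[OF refl])
    fix y assume "y \<in> set t"
    then have "y \<noteq> e" using et by auto
    then show "lf (e+1) y = lf e y" by (auto simp: lf_def)
  qed
  have rpl: "t @ [e] \<in> perms (length (t @ [e]))" using rp by (simp add: perms_def)
  have std_r: "\<And>x. std (map (lf x) (t @ [e])) = t @ [e]"
    by (rule std_map[OF lf_mono rpl])
  have std_s: "\<And>x. std (map (lf x) s) = s"
    using std_map[OF lf_mono] sp by (simp add: perms_def)
  have e1: "1 \<le> e + 1" "e + 1 \<le> c + 1" using e by auto
  define W1 where "W1 = ins e (t @ [e])"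
  have W1p: "W1 \<in> perms (c+1)" using ins_perm[OF rp] e W1_def by simp
  have W1a: "Kequiv c (Kpart c m) (c+1) (ins e m) W1"
    apply (rule Kequiv_step[where a="[e]" and b="[]" and u="map (lf e) m" and v="map (lf e) (t@[e])"])
    using ins_perm[OF mp] e W1p std_m std_r m_shift rs lenm lt
    by (auto simp: W1_def ins_lf)
  have w1eq: "W1 = e # map (lf e) t @ [e+1]" by (simp add: W1_def ins_lf lf_def)
  have s1eq: "map (lf (e+1)) s = e # map (lf e) t" by (simp add: st mapeq[symmetric]) (simp add: lf_def)
  have W1b: "Kequiv c (Kpart c m) (c+1) W1 (G (e+1) m)"
    apply (rule Kequiv_step[where a="[]" and b="[e+1]" and u="map (lf (e+1)) s" and v="map (lf (e+1)) m"])
    using G_perm[OF mp e1] W1p std_m std_s[of "e+1"] ss m_shift lenm lt s1eq w1eq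
    by (auto simp: G_def st)
  show "Kequiv c (Kpart c m) (c+1) (ins e m) (G (e+1) m)"
    using Kequiv_trans W1a W1b by blast
  define W2 where "W2 = ins (e+1) (t @ [e])"
  have W2p: "W2 \<in> perms (c+1)" using ins_perm[OF rp e1] W2_def by simp
  have W2a: "Kequiv c (Kpart c m) (c+1) (ins (e+1) m) W2"
    apply (rule Kequiv_step[where a="[e+1]" and b="[]" and u="map (lf (e+1)) m" and v="map (lf (e+1)) (t@[e])"])
    using ins_perm[OF mp e1] W2p std_m std_r m_shift rs lenm lt
    by (auto simp: W2_def ins_lf)
  have w2eq: "W2 = (e+1) # map (lf (e+1)) t @ [e]" by (simp add: W2_def ins_lf lf_def)
  have s2eq: "map (lf e) s = (e+1) # map (lf (e+1)) t" using mapeq by (simp add: st lf_def[of e e])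
  have W2b: "Kequiv c (Kpart c m) (c+1) W2 (G e m)"
    apply (rule Kequiv_step[where a="[]" and b="[e]" and u="map (lf e) s" and v="map (lf e) m"])
    using G_perm[OF mp] e W2p std_m std_s[of e] ss m_shift lenm lt s2eq w2eq
    by (auto simp: G_def st)
  show "Kequiv c (Kpart c m) (c+1) (ins (e+1) m) (G e m)"
    using Kequiv_trans W2a W2b by blast
qed

lemma chain:
  "1 \<le> x \<Longrightarrow> x \<le> c + 1 \<Longrightarrow> Kequiv c (Kpart c m) (c+1) (ins x m) (ins (if odd x then 1 else 2) m)"
proof (induction x rule: less_induct)
  case (less x)
  show ?case
  proof (cases "x \<le> 2")
    case True
    then have "x = 1 \<or> x = 2" using less by auto
    then show ?thesis using Kequiv_refl ins_perm[OF mp] less.prems by auto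
  next
    case False
    have h: "1 \<le> x-2" "x-2 \<le> c" using False less.prems by auto
    have eq: "x - 2 + 1 = x - 1" using False by simp
    have a: "Kequiv c (Kpart c m) (c+1) (ins (x-2) m) (G (x-1) m)"
      using conn(1)[OF h] unfolding eq .
    have b: "Kequiv c (Kpart c m) (c+1) (ins x m) (G (x-1) m)"
      using conn(2)[of "x-1"] False less.prems by simp
    have ih: "Kequiv c (Kpart c m) (c+1) (ins (x-2) m) (ins (if odd (x-2) then 1 else 2) m)"
      using less.IH[of "x-2"] False less.prems by simp
    have "odd (x-2) = odd x" using False by simp
    then show ?thesis using Kequiv_trans[OF Kequiv_trans[OF b Kequiv_sym[OF a]] ih] by simp
  qed
qed

lemma final: "1 \<le> x \<Longrightarrow> x \<le> c + 1 \<Longrightarrow>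
  Kequiv c (Kpart c m) (c+1) (ins x m) (ins 1 m) \<or> Kequiv c (Kpart c m) (c+1) (ins x m) (ins 2 m)"
proof (cases "odd x")
  case True
  assume "1 \<le> x" "x \<le> c + 1"
  then show ?thesis using chain[of x] True by simp
next
  case False
  assume "1 \<le> x" "x \<le> c + 1"
  then show ?thesis using chain[of x] False by simp
qed

lemma finalG: "1 \<le> y \<Longrightarrow> y \<le> c + 1 \<Longrightarrow>
  Kequiv c (Kpart c m) (c+1) (G y m) (ins 1 m) \<or> Kequiv c (Kpart c m) (c+1) (G y m) (ins 2 m)"
proof (cases "y = 1")
  case True
  assume "1 \<le> y" "y \<le> c + 1"
  have "Kequiv c (Kpart c m) (c+1) (G y m) (ins 2 m)"
    using Kequiv_sym[OF conn(2)[of 1]] True c1 by (simp add: numeral_2_eq_2)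
  then show ?thesis by simp
next
  case False
  assume y: "1 \<le> y" "y \<le> c + 1"
  have a: "Kequiv c (Kpart c m) (c+1) (G y m) (ins (y-1) m)"
    using Kequiv_sym[OF conn(1)[of "y-1"]] False y by simp
  show ?thesis using final[of "y-1"] y False Kequiv_trans[OF a] by fastforce
qed

end

theorem lemma2p5:
  fixes c :: nat and m w :: "nat list"
  assumes "c > 1" and "m \<in> perms c"
    and "w \<in> perms (c + 1)" and "nonavoider m w"
  shows "Kequiv c (Kpart c m) (c + 1) w (ins 1 m) \<or> Kequiv c (Kpart c m) (c + 1) w (ins 2 m)"
proof -
  have lenm: "length m = c" using assms(2) by (simp add: perms_def)
  obtain a u b where w: "w = a @ u @ b" "length u = c" "std u \<in> shifts m"
    using assms(4) lenm by (auto simp: nonavoider_def)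
  have lw: "length w = c + 1" using assms(3) by (simp add: perms_def)
  have sw: "set w = {1..c+1}" using assms(3) by (simp add: perms_def)
  have mne: "m \<noteq> []" using lenm assms(1) by auto
  have msh: "m \<in> shifts m" using rot_shift[OF mne, of 0] by simp
  have stdm: "\<And>x. std (map (lf x) m) = m" using std_map[OF lf_mono] assms(2) lenm by simp
  have "length a + length b = 1" using w lw by simp
  then consider x where "a = [x]" "b = []" | y where "a = []" "b = [y]"
    by (metis (no_types) One_nat_def add_is_1 length_0_conv length_Suc_conv)
  then show ?thesis
  proof cases
    case 1
    have x: "1 \<le> x" "x \<le> c + 1" using sw w 1 by (metis atLeastAtMost_iff list.set_intros(1) append_Cons)+
    have "Kequiv c (Kpart c m) (c+1) w (ins x m)"
      apply (rule Kequiv_step[where a="[x]" and b="[]" and u=u and v="map (lf x) m"])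
      using assms(3) ins_perm[OF assms(2) x] w 1 stdm msh lenm by (auto simp: ins_lf)
    then show ?thesis using final[OF assms(1,2) x] Kequiv_trans by blast
  next
    case 2
    have yin: "y \<in> set w" using w 2 by simp
    have y: "1 \<le> y" "y \<le> c + 1" using sw yin by auto
    have "Kequiv c (Kpart c m) (c+1) w (G y m)"
      apply (rule Kequiv_step[where a="[]" and b="[y]" and u=u and v="map (lf y) m"])
      using assms(3) G_perm[OF assms(2) y] w 2 stdm msh lenm by (auto simp: G_def)
    then show ?thesis using finalG[OF assms(1,2) y] Kequiv_trans by blast
  qed
qed

end
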